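(* For every $d$-dimensional state $\rho$ and all integers $1\le k\le d$, \[ \mu_k(\rho)\le\log\big[l(\rho)+\lambda(\rho)(k-l(\rho))\big]. \]
   Context: Fixed computational basis; $\Delta$ the dephasing map; $\Pi_I=\sum_{i\in I}|i\rangle\langle i|$; logs base 2. $R^\rho=\Delta(\rho)^{-1/2}\rho\Delta(\rho)^{-1/2}$ (inverse on the support); $\mu_k(\rho)=\max_{I\subseteq[d],|I|\le k}\log\|\Pi_IR^\rho\Pi_I\|_\infty$; $l(\rho)=\max\{\mathrm{rk}(\Pi_I\Delta(\rho)\Pi_I):\ I\subseteq[d],\ \mathrm{rk}(\Pi_I\rho\Pi_I)=1\}$; $\lambda(\rho)=\max\{|R^\rho_{ij}|:1\le i<j\le d,\ |R^\rho_{ij}|<1\}$, set to $0$ if the set is empty. *)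

theory Defs
  imports "HOL-Analysis.Analysis"
begin

text \<open>d-dimensional matrices: complex^'n^'n with d = CARD('n).\<close>

definition quad_form :: "complex^'n^'n \<Rightarrow> complex^'n \<Rightarrow> complex" where
  "quad_form A x = (\<Sum>i\<in>UNIV. \<Sum>j\<in>UNIV. cnj (x$i) * A$i$j * x$j)"

definition is_state :: "complex^'n^'n \<Rightarrow> bool" where
  "is_state \<rho> \<longleftrightarrow> (\<forall>i j. \<rho>$i$j = cnj (\<rho>$j$i))
     \<and> (\<forall>x. Im (quad_form \<rho> x) = 0 \<and> 0 \<le> Re (quad_form \<rho> x))
     \<and> (\<Sum>i\<in>UNIV. \<rho>$i$i) = 1"

definition dephase :: "complex^'n^'n \<Rightarrow> complex^'n^'n" where
  "dephase A = (\<chi> i j. if i = j then A$i$j else 0)"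

definition diag_inv_sqrt :: "complex^'n^'n \<Rightarrow> complex^'n^'n" where
  "diag_inv_sqrt D = (\<chi> i j. if i = j \<and> D$i$i \<noteq> 0 then 1 / csqrt (D$i$i) else 0)"

definition Rmat :: "complex^'n^'n \<Rightarrow> complex^'n^'n" where
  "Rmat \<rho> = diag_inv_sqrt (dephase \<rho>) ** \<rho> ** diag_inv_sqrt (dephase \<rho>)"

definition proj :: "'n set \<Rightarrow> complex^'n^'n" where
  "proj I = (\<chi> i j. if i = j \<and> i \<in> I then 1 else 0)"

definition opnorm :: "complex^'n^'n \<Rightarrow> real" where
  "opnorm A = onorm (\<lambda>x. A *v x)"

definition mu :: "nat \<Rightarrow> complex^('n::finite)^'n \<Rightarrow> real" where
  "mu k \<rho> = Max {log 2 (opnorm (proj I ** Rmat \<rho> ** proj I)) | I. card I \<le> k}"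

definition ell :: "complex^('n::finite)^'n \<Rightarrow> nat" where
  "ell \<rho> = Max {rank (proj I ** dephase \<rho> ** proj I) | I. rank (proj I ** \<rho> ** proj I) = 1}"

definition lam :: "complex^('n::{finite,linorder})^('n::{finite,linorder}) \<Rightarrow> real" where
  "lam \<rho> = (let S = {cmod (Rmat \<rho> $ i $ j) | i j. i < j \<and> cmod (Rmat \<rho> $ i $ j) < 1}
            in if S = {} then 0 else Max S)"

end

theory Submission
  imports Defs
begin

lemma diag_left: "((\<chi> i j. if i = j then d i else 0) ** A) $ i $ j = d i * A $ i $ j"
  for A :: "'a::comm_ring_1^'n^'n"
  by (simp add: matrix_matrix_mult_def if_distrib[of "\<lambda>x. x * _"] sum.delta cong: if_cong)

lemma diag_right: "(A ** (\<chi> i j. if i = j then d i else 0)) $ i $ j = A $ i $ j * d j"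
  for A :: "'a::comm_ring_1^'n^'n"
  by (simp add: matrix_matrix_mult_def if_distrib[of "\<lambda>x. _ * x"] sum.delta' cong: if_cong)

definition sfac :: "complex^'n^'n \<Rightarrow> 'n \<Rightarrow> complex" where
  "sfac \<rho> i = (if \<rho>$i$i \<noteq> 0 then 1 / csqrt (\<rho>$i$i) else 0)"

lemma dis_eq: "diag_inv_sqrt (dephase \<rho>) = (\<chi> i j. if i = j then sfac \<rho> i else 0)"
  by (simp add: diag_inv_sqrt_def dephase_def sfac_def vec_eq_iff)

lemma Rmat_entry: "Rmat \<rho> $ i $ j = sfac \<rho> i * \<rho> $ i $ j * sfac \<rho> j"
  unfolding Rmat_def dis_eq by (simp add: diag_left diag_right)

lemma proj_eq: "proj I = (\<chi> i j. if i = j then (if i \<in> I then 1 else 0) else 0)"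
  by (simp add: proj_def vec_eq_iff)

lemma proj_entry: "(proj I ** A ** proj I) $ i $ j = (if i \<in> I \<and> j \<in> I then A $ i $ j else 0)"
  unfolding proj_eq by (simp add: diag_left diag_right)

lemma dephase_eq: "dephase A = (\<chi> i j. if i = j then A$i$i else 0)"
  by (simp add: dephase_def vec_eq_iff)
definition bil :: "complex^'n^'n \<Rightarrow> complex^'n \<Rightarrow> complex^'n \<Rightarrow> complex" where
  "bil A x y = (\<Sum>i\<in>UNIV. \<Sum>j\<in>UNIV. cnj (x$i) * A$i$j * y$j)"

lemma quad_bil: "quad_form A x = bil A x x"
  by (simp add: quad_form_def bil_def)

lemma bil_add_left: "bil A (x + y) z = bil A x z + bil A y z"
  by (simp add: bil_def algebra_simps sum.distrib)
lemma bil_add_right: "bil A x (y + z) = bil A x y + bil A x z"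
  by (simp add: bil_def algebra_simps sum.distrib)
lemma bil_scale_left: "bil A (c *s x) z = cnj c * bil A x z"
  by (simp add: bil_def algebra_simps sum_distrib_left)
lemma bil_scale_right: "bil A x (c *s z) = c * bil A x z"
  by (simp add: bil_def algebra_simps sum_distrib_left)
lemma bil_axis_left: "bil A (axis m 1) y = (\<Sum>j\<in>UNIV. A$m$j * y$j)"
proof -
  have "\<And>i. (\<Sum>j\<in>UNIV. cnj (axis m 1 $ i) * A$i$j*y$j) = (if i = m then (\<Sum>j\<in>UNIV. A$m$j*y$j) else 0)"
    by (simp add: axis_def)
  then show ?thesis unfolding bil_def by simp
qed
lemma bil_axis_right: "bil A x (axis m 1) = (\<Sum>i\<in>UNIV. cnj (x$i) * A$i$m)"
  by (simp add: bil_def axis_def if_distrib[of "\<lambda>x. _ * x"] sum.delta' cong: if_cong)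
lemma bil_axis_axis: "bil A (axis m 1) (axis n 1) = A$m$n"
  unfolding bil_axis_left by (simp add: axis_def if_distrib[of "\<lambda>x. _ * x"] cong: if_cong)

lemma quad_expand:
  assumes herm: "\<And>i j. A$i$j = cnj (A$j$i)"
  shows "quad_form A (x + t *s axis m 1) =
     quad_form A x + t * cnj ((A *v x)$m) + cnj t * ((A *v x)$m) + cnj t * t * A$m$m"
proof -
  have h: "(\<Sum>i\<in>UNIV. cnj (x$i) * A$i$m) = cnj ((A *v x)$m)"
    by (simp add: matrix_vector_mult_def herm[of _ m] mult.commute)
  have "quad_form A (x + t *s axis m 1) = bil A x x + bil A x (t *s axis m 1) + bil A (t *s axis m 1) x
     + bil A (t *s axis m 1) (t *s axis m 1)"
    unfolding quad_bil bil_add_left bil_add_right by simp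
  also have "\<dots> = bil A x x + t * cnj ((A *v x)$m) + cnj t * ((A *v x)$m) + cnj t * t * A$m$m"
    unfolding bil_scale_left bil_scale_right bil_axis_axis
    unfolding bil_axis_left bil_axis_right h
    by (simp add: matrix_vector_mult_def algebra_simps)
  finally show ?thesis by (simp add: quad_bil)
qed
lemma st_herm: "is_state \<rho> \<Longrightarrow> \<rho>$i$j = cnj (\<rho>$j$i)"
  unfolding is_state_def by blast
lemma st_psd: "is_state \<rho> \<Longrightarrow> Im (quad_form \<rho> x) = 0 \<and> 0 \<le> Re (quad_form \<rho> x)"
  unfolding is_state_def by blast
lemma quad_axis: "quad_form A (axis m 1) = A$m$m"
  by (simp add: quad_bil bil_axis_axis)
lemma st_diag: assumes "is_state \<rho>" shows "\<rho>$i$i = of_real (Re (\<rho>$i$i))" "0 \<le> Re (\<rho>$i$i)"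
  using st_psd[OF assms, of "axis i 1"] by (auto simp: quad_axis complex_eq_iff)

lemma mv_axis: "(A *v axis j 1) $ i = A$i$j" for A :: "'a::comm_ring_1^'n^'n"
  by (simp add: matrix_vector_mult_def axis_def if_distrib[of "\<lambda>x. _ * x"] cong: if_cong)

lemma key_ineq:
  assumes st: "is_state \<rho>"
  shows "0 \<le> Re (quad_form \<rho> x) + \<epsilon> * (cmod ((\<rho> *v x)$m))^2 * (\<epsilon> * Re (\<rho>$m$m) - 2)"
proof -
  define z where "z = (\<rho> *v x)$m"
  define t where "t = - (of_real \<epsilon>) * z"
  have "quad_form \<rho> (x + t *s axis m 1) =
     quad_form \<rho> x + t * cnj z + cnj t * z + cnj t * t * \<rho>$m$m"
    unfolding z_def by (rule quad_expand) (rule st_herm[OF st])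
  also have "\<dots> = quad_form \<rho> x + of_real (\<epsilon> * (cmod z)^2 * (\<epsilon> * Re (\<rho>$m$m) - 2))"
  proof -
    have r: "\<rho>$m$m = of_real (Re (\<rho>$m$m))" by (rule st_diag(1)[OF st])
    have zz: "z * cnj z = of_real ((cmod z)^2)" using complex_norm_square[of z] by simp
    have "t * cnj z + cnj t * z + cnj t * t * \<rho>$m$m = of_real (\<epsilon> * (cmod z)^2 * (\<epsilon> * Re (\<rho>$m$m) - 2))"
    proof -
      have "t * cnj z + cnj t * z + cnj t * t * \<rho>$m$m = of_real \<epsilon> * (of_real \<epsilon> * of_real (Re (\<rho>$m$m)) - 2) * (z * cnj z)"
      proof -
        have ct: "cnj t = - of_real \<epsilon> * cnj z" unfolding t_def by simp
        show ?thesis apply (subst r) unfolding ct unfolding t_def by algebra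
      qed
      also have "\<dots> = of_real (\<epsilon> * (\<epsilon> * Re (\<rho>$m$m) - 2) * (cmod z)^2)" unfolding zz by simp
      finally show ?thesis by (simp only: mult_ac)
    qed
    then show ?thesis by (simp only: add.assoc)
  qed
  finally have "Re (quad_form \<rho> (x + t *s axis m 1)) = Re (quad_form \<rho> x) + \<epsilon> * (cmod z)^2 * (\<epsilon> * Re (\<rho>$m$m) - 2)"
    by simp
  moreover have "0 \<le> Re (quad_form \<rho> (x + t *s axis m 1))" using st_psd[OF st] by blast
  ultimately have "0 \<le> Re (quad_form \<rho> x) + \<epsilon> * (cmod z)^2 * (\<epsilon> * Re (\<rho>$m$m) - 2)"
    by (simp only:)
  then show ?thesis by (simp only: z_def)
qed

lemma aux_zero: "0 < (e::real) \<Longrightarrow> d < 0 \<Longrightarrow> 0 \<le> b \<Longrightarrow> 0 \<le> e*b*d \<Longrightarrow> b = 0"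
proof -
  assume h: "0 < e" "d < 0" "0 \<le> b" "0 \<le> e*b*d"
  have "0 \<le> e*b" using h by simp
  then have "e*b*d \<le> 0" using h(2) by (simp add: mult_nonneg_nonpos)
  then have "e*b*d = 0" using h(4) by linarith
  then show "b = 0" using h(1,2) by simp
qed

lemma kernel:
  assumes st: "is_state \<rho>" and q0: "quad_form \<rho> x = 0"
  shows "\<rho> *v x = 0"
unfolding vec_eq_iff proof
  fix m
  define c where "c = Re (\<rho>$m$m)"
  have c0: "0 \<le> c" using st_diag(2)[OF st, of m] unfolding c_def .
  define \<epsilon> where "\<epsilon> = 1 / (c + 1)"
  have e1: "\<epsilon> > 0" using c0 unfolding \<epsilon>_def by simp
  have "\<epsilon> * c < 1" using c0 unfolding \<epsilon>_def by (simp add: divide_less_eq)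
  then have e2: "\<epsilon> * c - 2 < 0" by linarith
  have "0 \<le> Re (quad_form \<rho> x) + \<epsilon> * (cmod ((\<rho> *v x)$m))^2 * (\<epsilon> * Re (\<rho>$m$m) - 2)"
    by (rule key_ineq[OF st])
  then have "0 \<le> \<epsilon> * (cmod ((\<rho> *v x)$m))^2 * (\<epsilon> * c - 2)"
    unfolding q0 c_def by simp
  then have "(cmod ((\<rho> *v x)$m))^2 = 0" by (rule aux_zero[OF e1 e2 zero_le_power2])
  then show "(\<rho> *v x)$m = 0$m" by simp
qed

lemma offdiag_bound:
  assumes st: "is_state \<rho>" and pos: "Re (\<rho>$i$i) > 0"
  shows "(cmod (\<rho>$i$j))^2 \<le> Re (\<rho>$i$i) * Re (\<rho>$j$j)"
proof -
  define c where "c = Re (\<rho>$i$i)"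
  define y where "y = (cmod (\<rho>$i$j))^2"
  have cp: "c > 0" using pos c_def by simp
  have "0 \<le> Re (quad_form \<rho> (axis j 1)) + (1/c) * (cmod ((\<rho> *v axis j 1)$i))^2 * ((1/c) * Re (\<rho>$i$i) - 2)"
    by (rule key_ineq[OF st])
  then have "0 \<le> Re (\<rho>$j$j) + (1/c) * y * ((1/c) * c - 2)"
    unfolding quad_axis mv_axis c_def y_def .
  also have "(1/c) * c = 1" using cp by simp
  finally have "0 \<le> Re (\<rho>$j$j) - y / c" by simp
  then have "y / c \<le> Re (\<rho>$j$j)" by linarith
  then have "y \<le> Re (\<rho>$j$j) * c" using cp by (simp add: divide_le_eq)
  then show ?thesis unfolding y_def c_def by (simp add: mult.commute)
qed
lemma sfac_pos: assumes "is_state \<rho>" "0 < Re (\<rho>$i$i)"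
  shows "sfac \<rho> i = of_real (1 / sqrt (Re (\<rho>$i$i)))"
proof -
  have r: "\<rho>$i$i = of_real (Re (\<rho>$i$i))" by (rule st_diag(1)[OF assms(1)])
  show ?thesis using assms(2) unfolding sfac_def
    by (subst (1 2) r) (simp add: csqrt_of_real)
qed

lemma sfac_zero: assumes "is_state \<rho>" "\<not> 0 < Re (\<rho>$i$i)"
  shows "sfac \<rho> i = 0"
proof -
  have r: "\<rho>$i$i = of_real (Re (\<rho>$i$i))" by (rule st_diag(1)[OF assms(1)])
  have "Re (\<rho>$i$i) = 0" using assms st_diag(2)[OF assms(1), of i] by simp
  then have "\<rho>$i$i = 0" using r by simp
  then show ?thesis unfolding sfac_def by simp
qed

lemma R_cmod: assumes st: "is_state \<rho>"
  shows "cmod (Rmat \<rho> $ i $ j) = (if 0 < Re (\<rho>$i$i) \<and> 0 < Re (\<rho>$j$j)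
      then cmod (\<rho>$i$j) / sqrt (Re (\<rho>$i$i) * Re (\<rho>$j$j)) else 0)"
  unfolding Rmat_entry
  using sfac_pos[OF st, of i] sfac_pos[OF st, of j] sfac_zero[OF st, of i] sfac_zero[OF st, of j]
  by (auto simp: norm_mult real_sqrt_mult norm_divide)

lemma R_le1: assumes st: "is_state \<rho>" shows "cmod (Rmat \<rho> $ i $ j) \<le> 1"
proof (cases "0 < Re (\<rho>$i$i) \<and> 0 < Re (\<rho>$j$j)")
  case True
  have "cmod (\<rho>$i$j) \<le> sqrt (Re (\<rho>$i$i) * Re (\<rho>$j$j))"
    using True by (intro real_le_rsqrt offdiag_bound[OF st]) auto
  then show ?thesis using True by (simp add: R_cmod[OF st])
next
  case False then show ?thesis by (auto simp: R_cmod[OF st])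
qed

lemma R_sym: assumes st: "is_state \<rho>" shows "cmod (Rmat \<rho> $ i $ j) = cmod (Rmat \<rho> $ j $ i)"
  unfolding R_cmod[OF st] using st_herm[OF st, of i j] by (simp add: mult.commute)

lemma R_diag: assumes st: "is_state \<rho>" and "0 < Re (\<rho>$i$i)" shows "cmod (Rmat \<rho> $ i $ i) = 1"
proof -
  have r: "\<rho>$i$i = of_real (Re (\<rho>$i$i))" by (rule st_diag(1)[OF assms(1)])
  have "cmod (\<rho>$i$i) = Re (\<rho>$i$i)" using assms(2) by (subst r) simp
  then show ?thesis using assms(2) unfolding R_cmod[OF st] by simp
qed

lemma R_eq1: assumes st: "is_state \<rho>" and e: "cmod (Rmat \<rho> $ i $ j) = 1"
  shows "0 < Re (\<rho>$i$i)" "0 < Re (\<rho>$j$j)" "(cmod (\<rho>$i$j))^2 = Re (\<rho>$i$i) * Re (\<rho>$j$j)"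
proof -
  show p: "0 < Re (\<rho>$i$i)" "0 < Re (\<rho>$j$j)" using e unfolding R_cmod[OF st] by (auto split: if_splits)
  then have "cmod (\<rho>$i$j) = sqrt (Re (\<rho>$i$i) * Re (\<rho>$j$j))" using e unfolding R_cmod[OF st]
    by (simp add: field_simps)
  then show "(cmod (\<rho>$i$j))^2 = Re (\<rho>$i$i) * Re (\<rho>$j$j)" using p by simp
qed

lemma lam_props: fixes \<rho> :: "complex^('n::{finite,linorder})^('n::{finite,linorder})"
  assumes st: "is_state \<rho>"
  shows "0 \<le> lam \<rho>" "lam \<rho> \<le> 1"
    "\<And>i j. i \<noteq> j \<Longrightarrow> cmod (Rmat \<rho> $ i $ j) < 1 \<Longrightarrow> cmod (Rmat \<rho> $ i $ j) \<le> lam \<rho>"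
proof -
  define S where "S = {cmod (Rmat \<rho> $ i $ j) | i j. i < j \<and> cmod (Rmat \<rho> $ i $ j) < 1}"
  have l: "lam \<rho> = (if S = {} then 0 else Max S)" unfolding lam_def S_def Let_def by simp
  have fin: "finite S"
  proof -
    have "S \<subseteq> (\<lambda>(i,j). cmod (Rmat \<rho> $ i $ j)) ` UNIV" unfolding S_def by auto
    then show ?thesis by (rule finite_subset) simp
  qed
  have Sprop: "\<And>x. x \<in> S \<Longrightarrow> 0 \<le> x \<and> x < 1" unfolding S_def by auto
  show "0 \<le> lam \<rho>" using Sprop Max_in[OF fin] by (auto simp: l)
  show "lam \<rho> \<le> 1" using Sprop Max_in[OF fin] by (force simp: l)
  fix i j :: 'n assume ij: "i \<noteq> j" "cmod (Rmat \<rho> $ i $ j) < 1"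
  have "cmod (Rmat \<rho> $ i $ j) \<in> S"
  proof (cases "i < j")
    case True then show ?thesis using ij unfolding S_def by auto
  next
    case False then have "j < i" using ij by auto
    then show ?thesis using ij R_sym[OF st, of i j] unfolding S_def by auto
  qed
  then show "cmod (Rmat \<rho> $ i $ j) \<le> lam \<rho>" using fin by (auto simp: l)
qed
lemma col_prop:
  assumes st: "is_state \<rho>" and pi: "0 < Re (\<rho>$i$i)"
    and hj: "(cmod (\<rho>$i$j))^2 = Re (\<rho>$i$i) * Re (\<rho>$j$j)"
  shows "\<rho>$m$j = (\<rho>$i$j / \<rho>$i$i) * \<rho>$m$i"
proof -
  define a where "a = Re (\<rho>$i$i)"
  define b where "b = Re (\<rho>$j$j)"
  define z where "z = \<rho>$i$j"
  define t where "t = - (z / of_real a)"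
  have ra: "\<rho>$i$i = of_real a" using st_diag(1)[OF st] a_def by simp
  have rb: "\<rho>$j$j = of_real b" using st_diag(1)[OF st] b_def by simp
  have zz: "z * cnj z = of_real (a * b)" using complex_norm_square[of z] hj a_def b_def z_def by simp
  have a0: "a \<noteq> 0" using pi a_def by simp
  have "quad_form \<rho> (axis j 1 + t *s axis i 1) = \<rho>$j$j + t * cnj z + cnj t * z + cnj t * t * \<rho>$i$i"
    by (subst quad_expand[OF st_herm[OF st]]) (simp add: quad_axis mv_axis z_def)
  also have "\<dots> = 0"
  proof -
    have ca: "cnj (of_real a) = (of_real a :: complex)" by simp
    have a0': "(of_real a :: complex) \<noteq> 0" using a0 by simp
    have dv: "of_real (a*b) / (of_real a::complex) = of_real b"
    proof -
      have "a*b/a = b" using a0 by simp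
      then show ?thesis by (metis of_real_divide)
    qed
    have e1: "t * cnj z = - of_real b"
    proof -
      have "t * cnj z = - ((z * cnj z) / of_real a)" unfolding t_def by simp
      also have "\<dots> = - of_real b" unfolding zz dv by simp
      finally show ?thesis .
    qed
    have e2: "cnj t * z = - of_real b"
    proof -
      have "cnj t * z = - ((z * cnj z) / of_real a)" unfolding t_def by (simp add: mult.commute)
      also have "\<dots> = - of_real b" unfolding zz dv by simp
      finally show ?thesis .
    qed
    have e3: "cnj t * t * \<rho>$i$i = of_real b"
    proof -
      have "cnj t * t * \<rho>$i$i = (z * cnj z) / of_real a" unfolding t_def ra using a0'
        by (simp add: power2_eq_square field_simps)
      also have "\<dots> = of_real b" unfolding zz dv by simp
      finally show ?thesis .
    qed
    show ?thesis unfolding e1 e2 e3 rb by simp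
  qed
  finally have "\<rho> *v (axis j 1 + t *s axis i 1) = 0" by (rule kernel[OF st])
  then have "(\<rho> *v (axis j 1 + t *s axis i 1)) $ m = 0" by simp
  then have "\<rho>$m$j + t * \<rho>$m$i = 0"
  proof -
    have "(\<rho> *v (axis j 1 + t *s axis i 1)) $ m = (\<Sum>k\<in>UNIV. \<rho>$m$k * axis j 1 $ k) + t * (\<Sum>k\<in>UNIV. \<rho>$m$k * axis i 1 $ k)"
      by (simp add: matrix_vector_mult_def algebra_simps sum.distrib sum_distrib_left)
    also have "\<dots> = \<rho>$m$j + t * \<rho>$m$i"
      using mv_axis[of \<rho> j m] mv_axis[of \<rho> i m] by (simp add: matrix_vector_mult_def)
    finally show ?thesis using \<open>(\<rho> *v (axis j 1 + t *s axis i 1)) $ m = 0\<close> by simp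
  qed
  then show ?thesis unfolding t_def z_def using ra a0 by (simp add: field_simps)
qed

lemma norm_sq_vec: "(norm (y::complex^'n))^2 = (\<Sum>i\<in>UNIV. (cmod (y$i))^2)"
  unfolding norm_vec_def L2_set_def by (simp add: sum_nonneg)

lemma cs_weighted:
  fixes a u :: "'n \<Rightarrow> real"
  assumes "\<And>j. 0 \<le> a j"
  shows "(\<Sum>j\<in>S. a j * u j)^2 \<le> (\<Sum>j\<in>S. a j) * (\<Sum>j\<in>S. a j * (u j)^2)"
proof -
  have "(\<Sum>j\<in>S. sqrt (a j) * (sqrt (a j) * u j))^2 \<le> (\<Sum>j\<in>S. (sqrt (a j))^2) * (\<Sum>j\<in>S. (sqrt (a j) * u j)^2)"
    by (rule Cauchy_Schwarz_ineq_sum)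
  moreover have "\<And>j. sqrt (a j) * (sqrt (a j) * u j) = a j * u j" using assms
    by (simp add: mult.assoc[symmetric])
  moreover have "\<And>j. (sqrt (a j))^2 = a j" using assms by simp
  moreover have "\<And>j. (sqrt (a j) * u j)^2 = a j * (u j)^2" using assms by (simp add: power_mult_distrib)
  ultimately show ?thesis by simp
qed

lemma schur:
  fixes M :: "complex^'n^'n"
  assumes sym: "\<And>i j. cmod (M$i$j) = cmod (M$j$i)"
    and rows: "\<And>i. (\<Sum>j\<in>UNIV. cmod (M$i$j)) \<le> B" and B0: "0 \<le> B"
  shows "norm (M *v x) \<le> B * norm x"
proof -
  define a where "a i j = cmod (M$i$j)" for i j
  define u where "u j = cmod (x$j)" for j
  have a0: "0 \<le> a i j" for i j unfolding a_def by simp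
  have row_i: "(cmod ((M *v x)$i))^2 \<le> B * (\<Sum>j\<in>UNIV. a i j * (u j)^2)" for i
  proof -
    have "cmod ((M *v x)$i) \<le> (\<Sum>j\<in>UNIV. a i j * u j)"
      unfolding matrix_vector_mult_def a_def u_def
      by (simp add: norm_sum[THEN order_trans] norm_mult)
    then have "(cmod ((M *v x)$i))^2 \<le> (\<Sum>j\<in>UNIV. a i j * u j)^2"
      by (simp add: power_mono)
    also have "\<dots> \<le> (\<Sum>j\<in>UNIV. a i j) * (\<Sum>j\<in>UNIV. a i j * (u j)^2)"
      by (rule cs_weighted) (rule a0)
    also have "\<dots> \<le> B * (\<Sum>j\<in>UNIV. a i j * (u j)^2)"
      using rows[of i] unfolding a_def by (intro mult_right_mono) (auto intro: sum_nonneg)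
    finally show ?thesis .
  qed
  have "(norm (M *v x))^2 = (\<Sum>i\<in>UNIV. (cmod ((M *v x)$i))^2)" by (rule norm_sq_vec)
  also have "\<dots> \<le> (\<Sum>i\<in>UNIV. B * (\<Sum>j\<in>UNIV. a i j * (u j)^2))" by (rule sum_mono) (rule row_i)
  also have "\<dots> = B * (\<Sum>i\<in>UNIV. \<Sum>j\<in>UNIV. a i j * (u j)^2)" by (simp add: sum_distrib_left)
  also have "\<dots> = B * (\<Sum>j\<in>UNIV. \<Sum>i\<in>UNIV. a i j * (u j)^2)" by (subst sum.swap) (rule refl)
  also have "\<dots> = B * (\<Sum>j\<in>UNIV. (u j)^2 * (\<Sum>i\<in>UNIV. a j i))"
  proof -
    have "(\<Sum>i\<in>UNIV. a i j * (u j)^2) = (u j)^2 * (\<Sum>i\<in>UNIV. a j i)" for j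
    proof -
      have "(\<Sum>i\<in>UNIV. a i j * (u j)^2) = (\<Sum>i\<in>UNIV. a j i * (u j)^2)"
        by (rule sum.cong[OF refl]) (metis a_def sym)
      then show ?thesis by (simp add: sum_distrib_right mult.commute)
    qed
    then show ?thesis by simp
  qed
  also have "\<dots> \<le> B * (\<Sum>j\<in>UNIV. (u j)^2 * B)"
    using rows unfolding a_def by (intro mult_left_mono sum_mono B0) (auto intro: mult_left_mono)
  also have "\<dots> = B^2 * (\<Sum>j\<in>UNIV. (u j)^2)"
  proof -
    have "(\<Sum>j\<in>UNIV. (u j)^2 * B) = (\<Sum>j\<in>UNIV. (u j)^2) * B" by (simp add: sum_distrib_right)
    then show ?thesis by (simp add: power2_eq_square)
  qed
  also have "\<dots> = (B * norm x)^2"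
    by (simp only: norm_sq_vec u_def power_mult_distrib)
  finally have "(norm (M *v x))^2 \<le> (B * norm x)^2" .
  then show ?thesis by (rule power2_le_imp_le) (simp add: B0)
qed
lemma rank1:
  fixes \<rho> :: "complex^'n^'n"
  assumes st: "is_state \<rho>" and pi: "0 < Re (\<rho>$i$i)" and iC: "i \<in> C"
    and hC: "\<And>j. j \<in> C \<Longrightarrow> (cmod (\<rho>$i$j))^2 = Re (\<rho>$i$i) * Re (\<rho>$j$j)"
  shows "rank (proj C ** \<rho> ** proj C) = 1"
proof -
  define c where "c j = \<rho>$i$j / \<rho>$i$i" for j
  define w :: "complex^'n" where "w = (\<chi> j. if j \<in> C then c j else 0)"
  let ?M = "proj C ** \<rho> ** proj C"
  have ne: "\<rho>$i$i \<noteq> 0" using pi by auto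
  have rowm: "row m ?M = (if m \<in> C then \<rho>$m$i else 0) *s w" for m
  proof -
    have "(row m ?M)$j = ((if m \<in> C then \<rho>$m$i else 0) *s w)$j" for j
    proof (cases "m \<in> C \<and> j \<in> C")
      case True
      have eq: "\<rho>$m$j = (\<rho>$i$j / \<rho>$i$i) * \<rho>$m$i" using col_prop[OF st pi hC[of j], of m] True by blast
      have l: "(row m ?M)$j = \<rho>$m$j" using True by (simp add: row_def proj_entry)
      have r: "((if m \<in> C then \<rho>$m$i else 0) *s w)$j = \<rho>$m$i * c j" using True by (simp add: w_def)
      show ?thesis unfolding l r eq c_def by (simp only: mult.commute)
    next
      case False then show ?thesis by (auto simp: row_def proj_entry w_def)
    qed
    then show ?thesis by (simp add: vec_eq_iff)
  qed
  have sub: "rows ?M \<subseteq> vec.span {w}"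
    unfolding rows_def using rowm by (auto intro: vec.span_scale vec.span_base vec.span_zero)
  have "vec.dim (rows ?M) \<le> vec.dim {w}" by (rule vec.dim_mono[OF sub])
  also have "\<dots> \<le> 1" by simp
  finally have le: "vec.dim (rows ?M) \<le> 1" .
  have "row i ?M \<noteq> 0"
  proof
    assume "row i ?M = 0"
    then have "(row i ?M) $ i = 0" by simp
    then show False using iC ne by (simp add: row_def proj_entry)
  qed
  moreover have "row i ?M \<in> rows ?M" unfolding rows_def by auto
  ultimately have nz0: "vec.dim (rows ?M) \<noteq> 0" by auto
  from le nz0 have "vec.dim (rows ?M) = 1" by linarith
  then show ?thesis unfolding row_rank_def_gen .
qed

lemma rank_diag_ge:
  fixes \<rho> :: "complex^'n^'n"
  assumes nz: "\<And>j. j \<in> C \<Longrightarrow> \<rho>$j$j \<noteq> 0"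
  shows "card C \<le> rank (proj C ** dephase \<rho> ** proj C)"
proof -
  let ?M = "proj C ** dephase \<rho> ** proj C"
  define B where "B = (\<lambda>m. axis m (1::complex)) ` C"
  have "B \<subseteq> vec.span (rows ?M)"
  proof
    fix x assume "x \<in> B"
    then obtain m where m: "m \<in> C" "x = axis m 1" unfolding B_def by auto
    have "axis m 1 = (1 / \<rho>$m$m) *s row m ?M"
      using m nz[of m] by (auto simp: vec_eq_iff row_def proj_entry dephase_eq axis_def)
    moreover have "row m ?M \<in> rows ?M" unfolding rows_def by auto
    ultimately show "x \<in> vec.span (rows ?M)" using m by (metis vec.span_base vec.span_scale)
  qed
  then have "vec.dim B \<le> vec.dim (rows ?M)" by (rule vec.dim_mono)
  moreover have "vec.independent B"
    by (rule vec.independent_mono[OF independent_cart_basis]) (auto simp: B_def cart_basis_def)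
  then have "vec.dim B = card B" by (rule vec.dim_eq_card_independent)
  moreover have "card B = card C" unfolding B_def
    by (rule card_image) (auto simp: inj_on_def axis_eq_axis)
  ultimately show ?thesis unfolding row_rank_def_gen by simp
qed

lemma ell_ge:
  fixes \<rho> :: "complex^('n::finite)^'n"
  assumes st: "is_state \<rho>" and pi: "0 < Re (\<rho>$i$i)" and iC: "i \<in> C"
    and hC: "\<And>j. j \<in> C \<Longrightarrow> cmod (Rmat \<rho> $ i $ j) = 1"
  shows "card C \<le> ell \<rho>"
proof -
  have r1: "rank (proj C ** \<rho> ** proj C) = 1"
    by (rule rank1[OF st pi iC]) (rule R_eq1(3)[OF st hC])
  have nz: "\<rho>$j$j \<noteq> 0" if "j \<in> C" for j
  proof
    assume "\<rho>$j$j = 0"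
    then show False using R_eq1(2)[OF st hC[OF that]] by simp
  qed
  let ?S = "{rank (proj I ** dephase \<rho> ** proj I) | I. rank (proj I ** \<rho> ** proj I) = 1}"
  have fin: "finite ?S"
    by (rule finite_subset[of _ "(\<lambda>I. rank (proj I ** dephase \<rho> ** proj I)) ` UNIV"]) auto
  have "rank (proj C ** dephase \<rho> ** proj C) \<in> ?S" using r1 by auto
  then have "rank (proj C ** dephase \<rho> ** proj C) \<le> ell \<rho>" unfolding ell_def using fin by simp
  moreover have "card C \<le> rank (proj C ** dephase \<rho> ** proj C)"
    by (rule rank_diag_ge) (rule nz)
  ultimately show ?thesis by linarith
qed
lemma exists_pos_diag:
  fixes \<rho> :: "complex^('n::finite)^'n"
  assumes st: "is_state \<rho>" shows "\<exists>i. 0 < Re (\<rho>$i$i)"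
proof (rule ccontr)
  assume "\<not> (\<exists>i. 0 < Re (\<rho>$i$i))"
  then have "\<rho>$i$i = 0" for i using st_diag[OF st, of i] by (metis less_eq_real_def of_real_0)
  then have "(\<Sum>i\<in>UNIV. \<rho>$i$i) = 0" by simp
  moreover have "(\<Sum>i\<in>UNIV. \<rho>$i$i) = 1" using st unfolding is_state_def by blast
  ultimately show False by simp
qed

lemma B_ge:
  fixes \<rho> :: "complex^('n::{finite,linorder})^('n::{finite,linorder})"
  assumes st: "is_state \<rho>"
  shows "0 \<le> real (ell \<rho>) + lam \<rho> * (real k - real (ell \<rho>))"
    and "1 \<le> k \<Longrightarrow> 1 \<le> real (ell \<rho>) + lam \<rho> * (real k - real (ell \<rho>))"
proof -
  define L where "L = lam \<rho>"
  have L0: "0 \<le> L" and L1: "L \<le> 1" using lam_props[OF st] L_def by auto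
  obtain i0 where i0: "0 < Re (\<rho>$i0$i0)" using exists_pos_diag[OF st] by blast
  have "1 \<le> ell \<rho>"
    using ell_ge[OF st i0, of "{i0}"] R_diag[OF st i0] by simp
  then have ell1: "1 \<le> real (ell \<rho>)" by simp
  have eq1: "real (ell \<rho>) + lam \<rho> * (real k - real (ell \<rho>)) = real (ell \<rho>) + L * (real k - real (ell \<rho>))"
    unfolding L_def ..
  have eq2: "real (ell \<rho>) + lam \<rho> * (real k - real (ell \<rho>)) = real k + (1 - L) * (real (ell \<rho>) - real k)"
    unfolding L_def by (simp add: algebra_simps)
  have "(0 \<le> real (ell \<rho>) + lam \<rho> * (real k - real (ell \<rho>))) \<and>
     (1 \<le> k \<longrightarrow> 1 \<le> real (ell \<rho>) + lam \<rho> * (real k - real (ell \<rho>)))"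
  proof (cases "ell \<rho> \<le> k")
    case True
    then have "0 \<le> L * (real k - real (ell \<rho>))" using L0 by simp
    then show ?thesis using ell1 eq1 by linarith
  next
    case False
    have "0 \<le> (1 - L) * (real (ell \<rho>) - real k)" using False L1 by simp
    then show ?thesis using eq2 by auto
  qed
  then show "0 \<le> real (ell \<rho>) + lam \<rho> * (real k - real (ell \<rho>))"
    and "1 \<le> k \<Longrightarrow> 1 \<le> real (ell \<rho>) + lam \<rho> * (real k - real (ell \<rho>))" by auto
qed

lemma row_bound:
  fixes \<rho> :: "complex^('n::{finite,linorder})^('n::{finite,linorder})"
  assumes st: "is_state \<rho>" and cI: "card I \<le> k"
  shows "(\<Sum>j\<in>UNIV. cmod ((proj I ** Rmat \<rho> ** proj I)$i$j))
      \<le> real (ell \<rho>) + lam \<rho> * (real k - real (ell \<rho>))"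
    (is "?S \<le> ?B")
proof -
  define L where "L = lam \<rho>"
  have L0: "0 \<le> L" and L1: "L \<le> 1" using lam_props[OF st] L_def by auto
  have B1: "0 \<le> ?B" by (rule B_ge(1)[OF st])
  show ?thesis
  proof (cases "i \<in> I \<and> 0 < Re (\<rho>$i$i)")
    case False
    have "cmod ((proj I ** Rmat \<rho> ** proj I)$i$j) = 0" for j
    proof (cases "i \<in> I \<and> j \<in> I")
      case T2: True
      then have np: "\<not> 0 < Re (\<rho>$i$i)" using False by auto
      have "cmod ((proj I ** Rmat \<rho> ** proj I)$i$j) = cmod (Rmat \<rho> $ i $ j)" using T2 by (simp add: proj_entry)
      also have "\<dots> = 0" unfolding R_cmod[OF st] using np by simp
      finally show ?thesis .
    next
      case F2: False
      have "(proj I ** Rmat \<rho> ** proj I)$i$j = 0" unfolding proj_entry using F2 by (simp only: if_False)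
      then show ?thesis by simp
    qed
    then have "?S = 0" by simp
    then show ?thesis using B1 by linarith
  next
    case True
    define C where "C = {j \<in> I. cmod (Rmat \<rho> $ i $ j) = 1}"
    have finI: "finite I" by simp
    have CI: "C \<subseteq> I" unfolding C_def by auto
    have iC: "i \<in> C" using True R_diag[OF st] unfolding C_def by auto
    have cC: "card C \<le> ell \<rho>" by (rule ell_ge[OF st _ iC]) (use True C_def in auto)
    have "?S = (\<Sum>j\<in>I. cmod (Rmat \<rho> $ i $ j))"
      using True by (simp add: proj_entry if_distrib[of cmod] sum.If_cases)
    also have "\<dots> = (\<Sum>j\<in>C. cmod (Rmat \<rho> $ i $ j)) + (\<Sum>j\<in>I - C. cmod (Rmat \<rho> $ i $ j))"
      using sum.subset_diff[OF CI finI] by (simp add: add.commute)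
    also have "(\<Sum>j\<in>C. cmod (Rmat \<rho> $ i $ j)) = real (card C)" unfolding C_def by simp
    also have "(\<Sum>j\<in>I - C. cmod (Rmat \<rho> $ i $ j)) \<le> real (card (I - C)) * L"
    proof (rule sum_bounded_above)
      fix j assume j: "j \<in> I - C"
      then have ne: "cmod (Rmat \<rho> $ i $ j) \<noteq> 1" unfolding C_def by auto
      then have lt: "cmod (Rmat \<rho> $ i $ j) < 1" using R_le1[OF st, of i j] by linarith
      have "i \<noteq> j" using j iC by auto
      then show "cmod (Rmat \<rho> $ i $ j) \<le> L" using lam_props(3)[OF st _ lt] L_def by simp
    qed
    also have "card (I - C) = card I - card C" using card_Diff_subset[OF _ CI] finite_subset[OF CI finI] by simp
    finally have s1: "?S \<le> real (card C) + real (card I - card C) * L" by simp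
    have "card C \<le> card I" using card_mono[OF finI CI] .
    then have "real (card I - card C) = real (card I) - real (card C)" by simp
    then have "real (card I - card C) * L \<le> (real k - real (card C)) * L"
      using cI L0 by (simp add: mult_right_mono)
    moreover have "0 \<le> (real (ell \<rho>) - real (card C)) * (1 - L)" using cC L1 by simp
    moreover have "?B - (real (card C) + (real k - real (card C)) * L) = (real (ell \<rho>) - real (card C)) * (1 - L)"
      unfolding L_def by (simp add: algebra_simps)
    ultimately show ?thesis using s1 by linarith
  qed
qed


lemma opnorm_bound:
  fixes \<rho> :: "complex^('n::{finite,linorder})^('n::{finite,linorder})"
  assumes st: "is_state \<rho>" and cI: "card I \<le> k"
  shows "opnorm (proj I ** Rmat \<rho> ** proj I) \<le> real (ell \<rho>) + lam \<rho> * (real k - real (ell \<rho>))"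
proof -
  let ?M = "proj I ** Rmat \<rho> ** proj I"
  let ?B = "real (ell \<rho>) + lam \<rho> * (real k - real (ell \<rho>))"
  have sym: "cmod (?M$i$j) = cmod (?M$j$i)" for i j
    unfolding proj_entry using R_sym[OF st, of i j] by auto
  have "norm (?M *v x) \<le> ?B * norm x" for x
    by (rule schur[OF sym row_bound[OF st cI] B_ge(1)[OF st]])
  then show ?thesis unfolding opnorm_def by (rule onorm_le)
qed

theorem lemma7:
  fixes \<rho> :: "complex^('n::{finite,linorder})^('n::{finite,linorder})" and k :: nat
  assumes "is_state \<rho>" and "1 \<le> k" and "k \<le> CARD('n)"
  shows "mu k \<rho> \<le> log 2 (real (ell \<rho>) + lam \<rho> * (real k - real (ell \<rho>)))"
proof -
  note st = assms(1)
  let ?B = "real (ell \<rho>) + lam \<rho> * (real k - real (ell \<rho>))"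
  have B1: "1 \<le> ?B" by (rule B_ge(2)[OF st assms(2)])
  let ?S = "{log 2 (opnorm (proj I ** Rmat \<rho> ** proj I)) | I. card I \<le> k}"
  have fin: "finite ?S"
    by (rule finite_subset[of _ "(\<lambda>I. log 2 (opnorm (proj I ** Rmat \<rho> ** proj I))) ` UNIV"]) auto
  have ne: "?S \<noteq> {}" proof - have "card ({}::'n set) \<le> k" by simp then show ?thesis by blast qed
  have bnd: "x \<le> log 2 ?B" if xS: "x \<in> ?S" for x
  proof -
    obtain I where I: "card I \<le> k" "x = log 2 (opnorm (proj I ** Rmat \<rho> ** proj I))"
      using xS by blast
    define y where "y = opnorm (proj I ** Rmat \<rho> ** proj I)"
    have y0: "0 \<le> y" unfolding y_def opnorm_def
      by (rule onorm_pos_le) (rule matrix_vector_mul_bounded_linear)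
    have yB: "y \<le> ?B" unfolding y_def by (rule opnorm_bound[OF st I(1)])
    have lB: "0 \<le> log 2 ?B" using B1 by simp
    show ?thesis
    proof (cases "y = 0")
      case True
      then show ?thesis using I(2) lB y_def by (simp add: log_def)
    next
      case False
      then have "0 < y" using y0 by simp
      then have "log 2 y \<le> log 2 ?B" using yB B1 by simp
      then show ?thesis using I(2) y_def by simp
    qed
  qed
  show ?thesis unfolding mu_def using fin ne bnd by (simp add: Max_le_iff)
qed

end
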